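(* In the setting described in the context, there exists a constant $C$ (independent of $\gamma$ and $\lambda_0$) such that for every $\gamma \in (0,\frac12)$, every $\lambda_0 > 1$ and every $0 \leq k \leq q$: $|d\hat u_k| \leq C$ at each point of $\mathbb{R}^n$; $\hat u_k$ is a convex function; and the Euclidean Hessian of $\hat u_k$ is bounded in norm by $C\lambda_k$ at each point of $\mathbb{R}^n$.
   Context: $n\ge 3$, $u_0,\dots,u_q$ are non-constant linear (affine) functions on $\mathbb{R}^n$ whose Euclidean gradients are unit vectors, and $\Omega=\bigcap_{m=0}^q\{u_m\le 0\}$ is a compact convex polytope with non-empty interior. Fix a smooth even function $\eta:\mathbb{R}\to\mathbb{R}$ with $\eta(t)=|t|$ for $|t|\ge \frac12$ and $\eta''\ge 0$ everywhere. For $\gamma\in(0,\frac12)$ and $\lambda_0>1$ set $\lambda_0$ as given and $\lambda_k=\gamma^{-k}\lambda_0$ for $1\le k\le q$. Define $\hat u_0=u_0$ and, for $1\le k\le q$, $\hat u_k=\frac12\big(\hat u_{k-1}+u_k+\lambda_k^{-1}\eta(\lambda_k(\hat u_{k-1}-u_k))\big)$. *)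

theory Defs
  imports "HOL-Analysis.Analysis"
begin

definition smooth_real :: "(real \<Rightarrow> real) \<Rightarrow> bool" where
  "smooth_real f \<longleftrightarrow> (\<forall>k x. ((deriv ^^ k) f) differentiable (at x))"

definition lam :: "real \<Rightarrow> real \<Rightarrow> nat \<Rightarrow> real" where
  "lam \<gamma> lam0 k = lam0 / \<gamma> ^ k"

primrec uhat :: "(nat \<Rightarrow> 'a \<Rightarrow> real) \<Rightarrow> (real \<Rightarrow> real) \<Rightarrow> real \<Rightarrow> real \<Rightarrow> nat \<Rightarrow> 'a \<Rightarrow> real" where
  "uhat u \<eta> \<gamma> lam0 0 x = u 0 x"
| "uhat u \<eta> \<gamma> lam0 (Suc k) x =
     (uhat u \<eta> \<gamma> lam0 k x + u (Suc k) x
      + \<eta> (lam \<gamma> lam0 (Suc k) * (uhat u \<eta> \<gamma> lam0 k x - u (Suc k) x)) / lam \<gamma> lam0 (Suc k)) / 2"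

end

theory Submission imports Defs begin
lemma eta_facts:
  fixes \<eta> :: "real \<Rightarrow> real"
  assumes eta_smooth: "smooth_real \<eta>"
    and eta_abs: "\<forall>t. \<bar>t\<bar> \<ge> 1/2 \<longrightarrow> \<eta> t = \<bar>t\<bar>"
    and eta_convex: "\<forall>t. deriv (deriv \<eta>) t \<ge> 0"
  shows "\<exists>M\<ge>0. (\<forall>t. (\<eta> has_real_derivative deriv \<eta> t) (at t)) \<and>
     (\<forall>t. (deriv \<eta> has_real_derivative deriv (deriv \<eta>) t) (at t)) \<and>
     (\<forall>t. \<bar>deriv \<eta> t\<bar> \<le> 1) \<and> mono (deriv \<eta>) \<and>
     (\<forall>t. 0 \<le> deriv (deriv \<eta>) t \<and> deriv (deriv \<eta>) t \<le> M)"
proof -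
  define e1 where "e1 = deriv \<eta>"
  define e2 where "e2 = deriv e1"
  have d0: "\<And>t. (\<eta> has_real_derivative e1 t) (at t)"
    using eta_smooth[unfolded smooth_real_def, rule_format, of 0] unfolding e1_def
    by (simp add: DERIV_deriv_iff_real_differentiable)
  have d1: "\<And>t. (e1 has_real_derivative e2 t) (at t)"
    using eta_smooth[unfolded smooth_real_def, rule_format, of 1] unfolding e1_def e2_def
    by (simp add: DERIV_deriv_iff_real_differentiable)
  have c2: "continuous_on UNIV e2"
    using eta_smooth[unfolded smooth_real_def, rule_format, of 2] unfolding e1_def e2_def
    by (simp add: numeral_2_eq_2 differentiable_imp_continuous_within continuous_at_imp_continuous_on)
  have pos: "\<And>t. 0 \<le> e2 t" using eta_convex unfolding e1_def e2_def by auto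
  have mono: "mono e1"
    by (rule monoI, rule DERIV_nonneg_imp_nondecreasing, assumption) (use d1 pos in blast)
  have p1: "e1 t = 1" if "t > 1/2" for t
  proof -
    have "((\<lambda>x. x) has_real_derivative 1) (at t)" by (rule DERIV_ident)
    then have "(\<eta> has_real_derivative 1) (at t)"
      unfolding has_field_derivative_def
      by (rule has_derivative_transform_within_open[where s="{1/2<..}"]) (use that eta_abs in auto)
    then show ?thesis using d0 DERIV_unique by blast
  qed
  have m1: "e1 t = -1" if "t < -1/2" for t
  proof -
    have "((\<lambda>x. -x) has_real_derivative -1) (at t)" by (rule derivative_eq_intros) auto
    then have "(\<eta> has_real_derivative -1) (at t)"
      unfolding has_field_derivative_def
      by (rule has_derivative_transform_within_open[where s="{..<-1/2}"]) (use that eta_abs in auto)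
    then show ?thesis using d0 DERIV_unique by blast
  qed
  have z2: "e2 t = 0" if "\<bar>t\<bar> > 1/2" for t
  proof (cases "t > 1/2")
    case True
    have "((\<lambda>x. 1) has_real_derivative 0) (at t)" by (rule DERIV_const)
    then have "(e1 has_real_derivative 0) (at t)"
      unfolding has_field_derivative_def
      by (rule has_derivative_transform_within_open[where s="{1/2<..}"]) (use True p1 in auto)
    then show ?thesis using d1 DERIV_unique by blast
  next
    case False
    then have t: "t < -1/2" using that by auto
    have "((\<lambda>x. -1) has_real_derivative 0) (at t)" by (rule DERIV_const)
    then have "(e1 has_real_derivative 0) (at t)"
      unfolding has_field_derivative_def
      by (rule has_derivative_transform_within_open[where s="{..<-1/2}"]) (use t m1 in auto)
    then show ?thesis using d1 DERIV_unique by blast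
  qed
  have b1: "\<bar>e1 t\<bar> \<le> 1" for t
  proof -
    have "e1 t \<le> e1 (max t 1)" "e1 (min t (-1)) \<le> e1 t" using mono by (auto simp: mono_def)
    moreover have "e1 (max t 1) = 1" "e1 (min t (-1)) = -1" using p1 m1 by auto
    ultimately show ?thesis by auto
  qed
  have "compact (e2 ` cball 0 1)"
    by (rule compact_continuous_image) (use c2 continuous_on_subset in auto)
  then obtain M where M: "\<And>y. y \<in> e2 ` cball 0 1 \<Longrightarrow> norm y \<le> M"
    using compact_imp_bounded bounded_iff by metis
  have "e2 t \<le> max M 0" for t
  proof (cases "\<bar>t\<bar> \<le> 1")
    case True then show ?thesis using M[of "e2 t"] by auto
  next
    case False then show ?thesis using z2[of t] by auto
  qed
  then show ?thesis using d0 d1 b1 mono pos unfolding e1_def e2_def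
    by (intro exI[of _ "max M 0"]) auto
qed
lemma step:
  fixes a :: "'a::euclidean_space \<Rightarrow> real" and ga :: "'a \<Rightarrow> 'a" and Ha :: "'a \<Rightarrow> 'a \<Rightarrow> 'a"
    and c :: 'a and b lam B M :: real and \<eta> e1 e2 :: "real \<Rightarrow> real"
  assumes d0: "\<And>t. (\<eta> has_real_derivative e1 t) (at t)"
    and d1: "\<And>t. (e1 has_real_derivative e2 t) (at t)"
    and b1: "\<And>t. \<bar>e1 t\<bar> \<le> 1" and mono: "mono e1"
    and b2: "\<And>t. 0 \<le> e2 t \<and> e2 t \<le> M"
    and da: "\<And>x. (a has_derivative (\<lambda>h. ga x \<bullet> h)) (at x)"
    and dga: "\<And>x. (ga has_derivative Ha x) (at x)"
    and nga: "\<And>x. norm (ga x) \<le> 1"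
    and nHa: "\<And>x. onorm (Ha x) \<le> B"
    and cva: "convex_on UNIV a"
    and nc: "norm c = 1" and lam: "lam > 0"
  shows "convex_on UNIV (\<lambda>x. (a x + (c \<bullet> x + b) + \<eta> (lam * (a x - (c \<bullet> x + b))) / lam) / 2) \<and>
    (\<exists>g H. \<forall>x. ((\<lambda>x. (a x + (c \<bullet> x + b) + \<eta> (lam * (a x - (c \<bullet> x + b))) / lam) / 2) has_derivative (\<lambda>h. g x \<bullet> h)) (at x) \<and>
       (g has_derivative H x) (at x) \<and> norm (g x) \<le> 1 \<and> onorm (H x) \<le> B + 2 * M * lam)"
proof -
  define r where "r x = a x - (c \<bullet> x + b)" for x
  define \<psi> where "\<psi> s = (s + \<eta> (lam * s) / lam) / 2" for s
  have feq: "(\<lambda>x. (a x + (c \<bullet> x + b) + \<eta> (lam * (a x - (c \<bullet> x + b))) / lam) / 2)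
     = (\<lambda>x. (c \<bullet> x + b) + \<psi> (r x))"
    by (auto simp: r_def \<psi>_def field_simps)
  have dpsi: "(\<psi> has_real_derivative (1 + e1 (lam * s)) / 2) (at s)" for s
    unfolding \<psi>_def using lam
    by (auto intro!: derivative_eq_intros DERIV_chain2[OF d0] simp: field_simps)
  have cpsi: "convex_on UNIV \<psi>"
  proof (rule convex_on_realI[OF _ dpsi])
    show "(1 + e1 (lam * x)) / 2 \<le> (1 + e1 (lam * y)) / 2" if "x \<le> y" for x y
      using mono lam that by (auto simp: mono_def)
  qed auto
  have mpsi: "\<psi> s \<le> \<psi> t" if "s \<le> t" for s t
  proof (rule DERIV_nonneg_imp_nondecreasing[OF that])
    fix x
    have "0 \<le> (1 + e1 (lam * x)) / 2" using b1[of "lam * x"] by (simp add: abs_le_iff)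
    then show "\<exists>y. (\<psi> has_real_derivative y) (at x) \<and> 0 \<le> y" using dpsi by blast
  qed
  have cr: "convex_on UNIV r"
    unfolding r_def
  proof (rule convex_onI)
    fix t :: real and x y :: 'a assume t: "0 < t" "t < 1"
    have "a ((1 - t) *\<^sub>R x + t *\<^sub>R y) \<le> (1 - t) * a x + t * a y"
      using convex_onD[OF cva] t by auto
    then show "a ((1 - t) *\<^sub>R x + t *\<^sub>R y) - (c \<bullet> ((1 - t) *\<^sub>R x + t *\<^sub>R y) + b)
       \<le> (1 - t) * (a x - (c \<bullet> x + b)) + t * (a y - (c \<bullet> y + b))"
      by (simp add: inner_add_right algebra_simps)
  qed simp
  have conv: "convex_on UNIV (\<lambda>x. (c \<bullet> x + b) + \<psi> (r x))"
  proof (rule convex_onI)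
    fix t :: real and x y :: 'a assume t: "0 < t" "t < 1"
    have "\<psi> (r ((1 - t) *\<^sub>R x + t *\<^sub>R y)) \<le> \<psi> ((1 - t) * r x + t * r y)"
      using convex_onD[OF cr] t mpsi by auto
    also have "\<dots> \<le> (1 - t) * \<psi> (r x) + t * \<psi> (r y)"
      using convex_onD[OF cpsi] t by auto
    finally show "c \<bullet> ((1 - t) *\<^sub>R x + t *\<^sub>R y) + b + \<psi> (r ((1 - t) *\<^sub>R x + t *\<^sub>R y))
         \<le> (1 - t) * (c \<bullet> x + b + \<psi> (r x)) + t * (c \<bullet> y + b + \<psi> (r y))"
      by (simp add: inner_add_right algebra_simps)
  qed simp
  define d where "d x = ga x - c" for x
  define e where "e x = e1 (lam * r x)" for x
  define g where "g x = ((1 + e x) / 2) *\<^sub>R ga x + ((1 - e x) / 2) *\<^sub>R c" for x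
  define H where "H x h = ((1 + e x) / 2) *\<^sub>R Ha x h + (lam * e2 (lam * r x) * (d x \<bullet> h) / 2) *\<^sub>R d x" for x h
  have dr: "(r has_derivative (\<lambda>h. d x \<bullet> h)) (at x)" for x
    unfolding r_def d_def
    by (rule has_derivative_eq_rhs, (rule derivative_eq_intros da)+) (auto simp: inner_diff_left)
  have dlr: "((\<lambda>x. lam * r x) has_derivative (\<lambda>h. lam * (d x \<bullet> h))) (at x)" for x
    by (rule has_derivative_eq_rhs, (rule derivative_eq_intros dr)+) auto
  have df: "((\<lambda>x. (c \<bullet> x + b) + \<psi> (r x)) has_derivative (\<lambda>h. g x \<bullet> h)) (at x)" for x
  proof -
    have "(\<psi> has_derivative (\<lambda>y. ((1 + e x) / 2) * y)) (at (r x))"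
      using dpsi[of "r x", unfolded has_field_derivative_def] unfolding e_def .
    from has_derivative_compose[OF dr this]
    have P: "((\<lambda>x. \<psi> (r x)) has_derivative (\<lambda>h. ((1 + e x) / 2) * (d x \<bullet> h))) (at x)" .
    have L: "((\<lambda>x. c \<bullet> x + b) has_derivative (\<lambda>h. c \<bullet> h)) (at x)"
      by (auto intro!: derivative_eq_intros)
    show ?thesis
      by (rule has_derivative_eq_rhs[OF has_derivative_add[OF L P]])
        (auto simp: g_def d_def inner_diff_left inner_add_left fun_eq_iff field_simps)
  qed
  have de: "(e has_derivative (\<lambda>h. e2 (lam * r x) * (lam * (d x \<bullet> h)))) (at x)" for x
  proof -
    have "(e1 has_derivative (\<lambda>y. e2 (lam * r x) * y)) (at (lam * r x))"
      using d1 unfolding has_field_derivative_def by simp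
    from has_derivative_compose[OF dlr this] show ?thesis unfolding e_def .
  qed
  have dg: "(g has_derivative H x) (at x)" for x
  proof -
    define E where "E h = e2 (lam * r x) * (lam * (d x \<bullet> h))" for h
    have A: "((\<lambda>x. e x *\<^sub>R (ga x - c)) has_derivative (\<lambda>h. e x *\<^sub>R (Ha x h - 0) + (E h) *\<^sub>R (ga x - c))) (at x)"
      unfolding E_def by (rule has_derivative_scaleR[OF de has_derivative_diff[OF dga has_derivative_const]])
    have B: "((\<lambda>x. ga x + c + e x *\<^sub>R (ga x - c)) has_derivative (\<lambda>h. Ha x h + 0 + (e x *\<^sub>R (Ha x h - 0) + (E h) *\<^sub>R (ga x - c)))) (at x)"
      by (rule has_derivative_add[OF has_derivative_add[OF dga has_derivative_const] A])
    have C: "((\<lambda>x. (1/2) *\<^sub>R (ga x + c + e x *\<^sub>R (ga x - c))) has_derivative (\<lambda>h. (1/2) *\<^sub>R (Ha x h + 0 + (e x *\<^sub>R (Ha x h - 0) + (E h) *\<^sub>R (ga x - c))))) (at x)"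
      by (rule has_derivative_scaleR_right[OF B])
    have geq: "g = (\<lambda>x. (1/2) *\<^sub>R (ga x + c + e x *\<^sub>R (ga x - c)))"
      by (simp add: g_def fun_eq_iff scaleR_add_right scaleR_diff_right scaleR_add_left scaleR_diff_left add_divide_distrib diff_divide_distrib algebra_simps)
    have Heq: "H x = (\<lambda>h. (1/2) *\<^sub>R (Ha x h + 0 + (e x *\<^sub>R (Ha x h - 0) + (E h) *\<^sub>R (ga x - c))))"
      by (simp add: H_def E_def d_def fun_eq_iff scaleR_add_right scaleR_diff_right scaleR_add_left scaleR_diff_left add_divide_distrib diff_divide_distrib algebra_simps)
    show ?thesis unfolding geq Heq by (rule C)
  qed
  have ng: "norm (g x) \<le> 1" for x
  proof -
    have "norm (g x) \<le> \<bar>(1 + e x) / 2\<bar> * norm (ga x) + \<bar>(1 - e x) / 2\<bar> * norm c"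
      unfolding g_def by (rule order_trans[OF norm_triangle_ineq]) simp
    also have "\<dots> = ((1 + e x) / 2) * norm (ga x) + ((1 - e x) / 2)"
      using b1[of "lam * r x"] nc unfolding e_def by (simp add: abs_le_iff)
    also have "\<dots> \<le> ((1 + e x) / 2) * 1 + ((1 - e x) / 2)"
      using b1[of "lam * r x"] nga[of x] unfolding e_def
      by (intro add_mono mult_left_mono) (auto simp: abs_le_iff)
    finally show ?thesis by (simp add: field_simps)
  qed
  have nH: "onorm (H x) \<le> B + 2 * M * lam" for x
  proof (rule onorm_le)
    fix h
    have bl: "bounded_linear (Ha x)" using dga has_derivative_bounded_linear by blast
    have nd: "norm (d x) \<le> 2" unfolding d_def
      using norm_triangle_ineq4[of "ga x" c] nga[of x] nc by simp
    have ee: "0 \<le> (1 + e x) / 2" "(1 + e x) / 2 \<le> 1"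
      using b1[of "lam * r x"] unfolding e_def by (auto simp: abs_le_iff)
    have e2b: "0 \<le> e2 (lam * r x)" "e2 (lam * r x) \<le> M" using b2 by auto
    have "norm (H x h) \<le> \<bar>(1 + e x) / 2\<bar> * norm (Ha x h) + \<bar>lam * e2 (lam * r x) * (d x \<bullet> h) / 2\<bar> * norm (d x)"
      unfolding H_def by (rule order_trans[OF norm_triangle_ineq]) simp
    also have "\<bar>(1 + e x) / 2\<bar> * norm (Ha x h) \<le> 1 * (B * norm h)"
      using ee order_trans[OF onorm[OF bl, of h] mult_right_mono[OF nHa[of x] norm_ge_zero]]
      by (intro mult_mono) auto
    also have "\<bar>lam * e2 (lam * r x) * (d x \<bullet> h) / 2\<bar> * norm (d x)
        = lam * e2 (lam * r x) * \<bar>d x \<bullet> h\<bar> / 2 * norm (d x)"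
      using lam e2b by (simp add: abs_mult)
    also have "\<dots> \<le> lam * M * (norm (d x) * norm h) / 2 * 2"
      using lam e2b nd Cauchy_Schwarz_ineq2[of "d x" h]
      by (intro mult_mono divide_right_mono) (auto intro!: mult_mono)
    also have "\<dots> \<le> lam * M * (2 * norm h) / 2 * 2"
      using lam e2b nd by (intro mult_mono divide_right_mono) auto
    finally show "norm (H x h) \<le> (B + 2 * M * lam) * norm h" by (simp add: algebra_simps)
  qed
  show ?thesis unfolding feq using conv df dg ng nH by blast
qed
theorem lemma2p8:
  fixes u :: "nat \<Rightarrow> real ^ 'n \<Rightarrow> real" and q :: nat and \<eta> :: "real \<Rightarrow> real"
  assumes dim: "CARD('n) \<ge> 3"
    and affine_u: "\<forall>m\<le>q. \<exists>a b. norm a = 1 \<and> (\<forall>x. u m x = a \<bullet> x + b)"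
    and Omega_compact: "compact {x. \<forall>m\<le>q. u m x \<le> 0}"
    and Omega_int: "interior {x. \<forall>m\<le>q. u m x \<le> 0} \<noteq> {}"
    and eta_smooth: "smooth_real \<eta>"
    and eta_even: "\<forall>t. \<eta> (- t) = \<eta> t"
    and eta_abs: "\<forall>t. \<bar>t\<bar> \<ge> 1/2 \<longrightarrow> \<eta> t = \<bar>t\<bar>"
    and eta_convex: "\<forall>t. deriv (deriv \<eta>) t \<ge> 0"
  shows "\<exists>C. \<forall>\<gamma> lam0 k. 0 < \<gamma> \<and> \<gamma> < 1/2 \<and> lam0 > 1 \<and> k \<le> q \<longrightarrow>
           convex_on UNIV (uhat u \<eta> \<gamma> lam0 k) \<and>
           (\<exists>g H. \<forall>x.
              (uhat u \<eta> \<gamma> lam0 k has_derivative (\<lambda>h. g x \<bullet> h)) (at x) \<and>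
              (g has_derivative H x) (at x) \<and>
              norm (g x) \<le> C \<and>
              onorm (H x) \<le> C * lam \<gamma> lam0 k)"
proof -
  obtain M where M0: "M \<ge> 0"
    and d0: "\<And>t. (\<eta> has_real_derivative deriv \<eta> t) (at t)"
    and d1: "\<And>t. (deriv \<eta> has_real_derivative deriv (deriv \<eta>) t) (at t)"
    and b1: "\<And>t. \<bar>deriv \<eta> t\<bar> \<le> 1" and mono: "mono (deriv \<eta>)"
    and b2: "\<And>t. 0 \<le> deriv (deriv \<eta>) t \<and> deriv (deriv \<eta>) t \<le> M"
    using eta_facts[OF eta_smooth eta_abs eta_convex] by blast
  have main: "k \<le> q \<longrightarrow> convex_on UNIV (uhat u \<eta> \<gamma> lam0 k) \<and>
           (\<exists>g H. \<forall>x.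
              (uhat u \<eta> \<gamma> lam0 k has_derivative (\<lambda>h. g x \<bullet> h)) (at x) \<and>
              (g has_derivative H x) (at x) \<and>
              norm (g x) \<le> 1 \<and>
              onorm (H x) \<le> 4 * M * lam \<gamma> lam0 k)"
    if g: "0 < \<gamma>" "\<gamma> < 1/2" and l: "lam0 > 1" for \<gamma> lam0 :: real and k
  proof (induction k)
    case 0
    show ?case
    proof
      assume "0 \<le> q"
      then obtain a b where ab: "norm a = 1" "\<And>x. u 0 x = a \<bullet> x + b" using affine_u by blast
      have ue: "uhat u \<eta> \<gamma> lam0 0 = (\<lambda>x. a \<bullet> x + b)" using ab by (simp add: fun_eq_iff)
      have cv: "convex_on UNIV (\<lambda>x::real^'n. a \<bullet> x + b)"
        by (rule convex_onI) (auto simp: inner_add_right algebra_simps)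
      have lp: "0 \<le> lam \<gamma> lam0 0" using l by (simp add: lam_def)
      have "\<forall>x. ((\<lambda>x. a \<bullet> x + b) has_derivative (\<lambda>h. a \<bullet> h)) (at x) \<and>
              ((\<lambda>x. a) has_derivative (\<lambda>h. 0)) (at x) \<and> norm a \<le> 1 \<and>
              onorm (\<lambda>h::real^'n. 0::real^'n) \<le> 4 * M * lam \<gamma> lam0 0"
        using ab lp M0 by (auto intro!: derivative_eq_intros simp: onorm_zero)
      then show "convex_on UNIV (uhat u \<eta> \<gamma> lam0 0) \<and>
           (\<exists>g H. \<forall>x.
              (uhat u \<eta> \<gamma> lam0 0 has_derivative (\<lambda>h. g x \<bullet> h)) (at x) \<and>
              (g has_derivative H x) (at x) \<and>
              norm (g x) \<le> 1 \<and>
              onorm (H x) \<le> 4 * M * lam \<gamma> lam0 0)"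
        unfolding ue using cv by (intro conjI exI[of _ "\<lambda>x. a"] exI[of _ "\<lambda>x h. 0"]) auto
    qed
  next
    case (Suc k)
    show ?case
    proof
      assume kq: "Suc k \<le> q"
      then obtain ga Ha where cva: "convex_on UNIV (uhat u \<eta> \<gamma> lam0 k)"
        and IH: "\<And>x. (uhat u \<eta> \<gamma> lam0 k has_derivative (\<lambda>h. ga x \<bullet> h)) (at x)"
           "\<And>x. (ga has_derivative Ha x) (at x)" "\<And>x. norm (ga x) \<le> 1"
           "\<And>x. onorm (Ha x) \<le> 4 * M * lam \<gamma> lam0 k"
        using Suc.IH by auto
      obtain c b where cb: "norm c = 1" "\<And>x. u (Suc k) x = c \<bullet> x + b" using affine_u kq by blast
      have lp: "lam \<gamma> lam0 (Suc k) > 0" using l g by (simp add: lam_def)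
      have lk: "lam \<gamma> lam0 k = \<gamma> * lam \<gamma> lam0 (Suc k)" using g by (simp add: lam_def)
      have ue: "uhat u \<eta> \<gamma> lam0 (Suc k) = (\<lambda>x. (uhat u \<eta> \<gamma> lam0 k x + (c \<bullet> x + b) + \<eta> (lam \<gamma> lam0 (Suc k) * (uhat u \<eta> \<gamma> lam0 k x - (c \<bullet> x + b))) / lam \<gamma> lam0 (Suc k)) / 2)"
        using cb by (simp add: fun_eq_iff)
      have S: "convex_on UNIV (uhat u \<eta> \<gamma> lam0 (Suc k)) \<and>
        (\<exists>g H. \<forall>x. (uhat u \<eta> \<gamma> lam0 (Suc k) has_derivative (\<lambda>h. g x \<bullet> h)) (at x) \<and>
       (g has_derivative H x) (at x) \<and> norm (g x) \<le> 1 \<and> onorm (H x) \<le> 4 * M * lam \<gamma> lam0 k + 2 * M * lam \<gamma> lam0 (Suc k))"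
        unfolding ue by (rule step[OF d0 d1 b1 mono b2 IH(1) IH(2) IH(3) IH(4) cva cb(1) lp])
      have "4 * M * lam \<gamma> lam0 k + 2 * M * lam \<gamma> lam0 (Suc k) \<le> 4 * M * lam \<gamma> lam0 (Suc k)"
        unfolding lk using g lp M0 by (simp add: algebra_simps mult_left_mono)
      then show "convex_on UNIV (uhat u \<eta> \<gamma> lam0 (Suc k)) \<and>
           (\<exists>g H. \<forall>x.
              (uhat u \<eta> \<gamma> lam0 (Suc k) has_derivative (\<lambda>h. g x \<bullet> h)) (at x) \<and>
              (g has_derivative H x) (at x) \<and>
              norm (g x) \<le> 1 \<and>
              onorm (H x) \<le> 4 * M * lam \<gamma> lam0 (Suc k))"
        using S by (meson order_trans)
    qed
  qed
  show ?thesis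
  proof (rule exI[of _ "1 + 4 * M"], intro allI impI)
    fix \<gamma> lam0 :: real and k assume a: "0 < \<gamma> \<and> \<gamma> < 1/2 \<and> lam0 > 1 \<and> k \<le> q"
    then obtain g H where cv: "convex_on UNIV (uhat u \<eta> \<gamma> lam0 k)" and
      gH: "\<forall>x. (uhat u \<eta> \<gamma> lam0 k has_derivative (\<lambda>h. g x \<bullet> h)) (at x) \<and>
              (g has_derivative H x) (at x) \<and>
              norm (g x) \<le> 1 \<and>
              onorm (H x) \<le> 4 * M * lam \<gamma> lam0 k"
      using main[of \<gamma> lam0 k] by auto
    have lp: "lam \<gamma> lam0 k > 0" using a by (simp add: lam_def)
    have "4 * M * lam \<gamma> lam0 k \<le> (1 + 4 * M) * lam \<gamma> lam0 k" using lp by simp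
    then show "convex_on UNIV (uhat u \<eta> \<gamma> lam0 k) \<and>
           (\<exists>g H. \<forall>x.
              (uhat u \<eta> \<gamma> lam0 k has_derivative (\<lambda>h. g x \<bullet> h)) (at x) \<and>
              (g has_derivative H x) (at x) \<and>
              norm (g x) \<le> 1 + 4 * M \<and>
              onorm (H x) \<le> (1 + 4 * M) * lam \<gamma> lam0 k)"
      using cv gH M0 by (intro conjI exI[of _ g] exI[of _ H]) (auto intro: order_trans)
  qed
qed

end
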